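(* Let $n=2e$ be even and let $\sigma$ be a permutation of $\mathbb{Z}_n$; its cycles $V_1,\dots,V_v$ are disjoint circularly ordered subsets covering $\mathbb{Z}_n$, and we say "$ij\cdots$ is a subset" when $\sigma(i)=j$. Then $V_1,\dots,V_v$ is a vertex set (i.e., $\sigma$ is induced by an orientable planar diagram of the $n$-gon all of whose vertices have degree at least $3$) if and only if the following three conditions hold: (1) each $V_k$ has at least three elements; (2) for no $i\in\mathbb{Z}_n$ is $i(i+1)\cdots$ a subset, i.e. $\sigma(i)\ne i+1$ for all $i$; (3) whenever $ij\cdots$ is a subset, $(j-1)(i+1)\cdots$ is also a subset, i.e. $\sigma(\sigma(i)-1)=i+1$ for all $i$.
   Context: The corners of an $n$-gon are labelled by $i\in\mathbb{Z}_n$ in circular order, and $\bar i$ denotes the edge from corner $i$ to corner $i+1$. An orientable planar diagram is a partition of the $n$ edges into $e=n/2$ unordered pairs $\{\bar i,\bar j\}$ (with $i\ne j$), each pair to be glued in the opposing (orientation-compatible) way; the glueing yields a single-tile tiling of a closed orientable surface. A pair $\{\bar i,\bar j\}$ makes corner $j+1$ adjacent (next in the circular order) to corner $i$ at a vertex, and corner $i+1$ adjacent to corner $j$ at a vertex. Thus, writing $\tau(i)=j$ when $\{\bar i,\bar j\}$ is a pair, the diagram induces the permutation $\sigma(i)=\tau(i)+1$ of $\mathbb{Z}_n$, whose cycles (circularly ordered subsets of corners) are the vertices of the tiling; the degree of a vertex is the size of its cycle. A vertex set is the collection of cycles induced in this way by a planar diagram all of whose vertices have degree at least $3$. *)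

theory Defs
  imports "HOL-Combinatorics.Permutations"
begin

text \<open>Corners of the n-gon are 0..<n, read as Z_n (arithmetic mod n).
 Edge i goes from corner i to corner i+1 (mod n).
 An orientable planar diagram is encoded by the pairing tau: tau i = j iff {i,j} is a pair;
 so tau is a fixed-point-free involution of {0..<n}.\<close>

definition planar_diagram :: "nat \<Rightarrow> (nat \<Rightarrow> nat) \<Rightarrow> bool" where
  "planar_diagram n \<tau> \<longleftrightarrow>
     (\<forall>i<n. \<tau> i < n \<and> \<tau> i \<noteq> i \<and> \<tau> (\<tau> i) = i)"

definition induced_perm :: "nat \<Rightarrow> (nat \<Rightarrow> nat) \<Rightarrow> nat \<Rightarrow> nat" where
  "induced_perm n \<tau> i = (\<tau> i + 1) mod n"

definition cycle_of :: "(nat \<Rightarrow> nat) \<Rightarrow> nat \<Rightarrow> nat set" where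
  "cycle_of \<sigma> i = {(\<sigma> ^^ k) i | k. True}"

definition is_vertex_set :: "nat \<Rightarrow> (nat \<Rightarrow> nat) \<Rightarrow> bool" where
  "is_vertex_set n \<sigma> \<longleftrightarrow>
     (\<exists>\<tau>. planar_diagram n \<tau> \<and> (\<forall>i<n. \<sigma> i = induced_perm n \<tau> i)
          \<and> (\<forall>i<n. card (cycle_of \<sigma> i) \<ge> 3))"

end

theory Submission
  imports Defs
begin

lemma modsub: "(a::nat) < n \<Longrightarrow> ((a + n - 1) mod n + 1) mod n = a"
proof -
  assume a: "a < n"
  show ?thesis
  proof (cases a)
    case 0
    then show ?thesis using a by (cases "n = 1") auto
  next
    case (Suc b)
    then have "a + n - 1 = b + n" by simp
    then have "(a + n - 1) mod n = b" using a Suc by simp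
    then show ?thesis using a Suc by simp
  qed
qed

lemma modsub2: "(a::nat) < n \<Longrightarrow> ((a + 1) mod n + n - 1) mod n = a"
proof -
  assume a: "a < n"
  show ?thesis
  proof (cases "a + 1 = n")
    case True
    then show ?thesis by simp
  next
    case False
    then have "a + 1 < n" using a by simp
    then show ?thesis by simp
  qed
qed

theorem proposition2p1:
  fixes n e :: nat and \<sigma> :: "nat \<Rightarrow> nat"
  assumes "n = 2 * e"
    and "\<sigma> permutes {0..<n}"
  shows "is_vertex_set n \<sigma> \<longleftrightarrow>
           ((\<forall>i<n. card (cycle_of \<sigma> i) \<ge> 3)
          \<and> (\<forall>i<n. \<sigma> i \<noteq> (i + 1) mod n)
          \<and> (\<forall>i<n. \<sigma> ((\<sigma> i + n - 1) mod n) = (i + 1) mod n))"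
proof
  assume "is_vertex_set n \<sigma>"
  then obtain \<tau> where pd: "planar_diagram n \<tau>" and s: "\<forall>i<n. \<sigma> i = induced_perm n \<tau> i"
    and c: "\<forall>i<n. card (cycle_of \<sigma> i) \<ge> 3" unfolding is_vertex_set_def by blast
  have t: "\<And>i. i < n \<Longrightarrow> \<tau> i < n \<and> \<tau> i \<noteq> i \<and> \<tau> (\<tau> i) = i"
    using pd unfolding planar_diagram_def by blast
  have s': "\<And>i. i < n \<Longrightarrow> \<sigma> i = (\<tau> i + 1) mod n"
    using s unfolding induced_perm_def by blast
  have 2: "\<forall>i<n. \<sigma> i \<noteq> (i + 1) mod n"
  proof (intro allI impI)
    fix i assume i: "i < n"
    show "\<sigma> i \<noteq> (i + 1) mod n"
    proof
      assume "\<sigma> i = (i + 1) mod n"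
      then have "((\<tau> i + 1) mod n + n - 1) mod n = ((i + 1) mod n + n - 1) mod n"
        using s'[OF i] by simp
      then have "\<tau> i = i" using modsub2 t[OF i] i by simp
      with t[OF i] show False by simp
    qed
  qed
  have 3: "\<forall>i<n. \<sigma> ((\<sigma> i + n - 1) mod n) = (i + 1) mod n"
  proof (intro allI impI)
    fix i assume i: "i < n"
    have "(\<sigma> i + n - 1) mod n = \<tau> i" using s'[OF i] modsub2 t[OF i] by simp
    then show "\<sigma> ((\<sigma> i + n - 1) mod n) = (i + 1) mod n"
      using s' t i by simp
  qed
  show "(\<forall>i<n. card (cycle_of \<sigma> i) \<ge> 3) \<and> (\<forall>i<n. \<sigma> i \<noteq> (i + 1) mod n)
          \<and> (\<forall>i<n. \<sigma> ((\<sigma> i + n - 1) mod n) = (i + 1) mod n)"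
    using c 2 3 by blast
next
  assume h: "(\<forall>i<n. card (cycle_of \<sigma> i) \<ge> 3) \<and> (\<forall>i<n. \<sigma> i \<noteq> (i + 1) mod n)
          \<and> (\<forall>i<n. \<sigma> ((\<sigma> i + n - 1) mod n) = (i + 1) mod n)"
  have sl: "\<And>i. i < n \<Longrightarrow> \<sigma> i < n"
    using assms(2) permutes_in_image[of \<sigma> "{0..<n}"] by simp
  define \<tau> where "\<tau> i = (\<sigma> i + n - 1) mod n" for i
  have pd: "planar_diagram n \<tau>"
    unfolding planar_diagram_def
  proof (intro allI impI conjI)
    fix i assume i: "i < n"
    show "\<tau> i < n" unfolding \<tau>_def using i by simp
    show "\<tau> (\<tau> i) = i" unfolding \<tau>_def using h i modsub2 by simp
    show "\<tau> i \<noteq> i"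
    proof
      assume "\<tau> i = i"
      then have "(\<tau> i + 1) mod n = (i + 1) mod n" by simp
      then have "\<sigma> i = (i + 1) mod n" unfolding \<tau>_def using modsub sl i by simp
      with h i show False by blast
    qed
  qed
  have "\<forall>i<n. \<sigma> i = induced_perm n \<tau> i"
    unfolding induced_perm_def \<tau>_def using modsub sl by simp
  then show "is_vertex_set n \<sigma>" unfolding is_vertex_set_def using pd h by blast
qed

end
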